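(* Let $\theta=9/10$, $k=6$ and $d\ge1$. Let $x\in\{0,1\}^{L_d}$ be such that there are at least $4$ children $i$ of the root with $$\mathbb{P}\big[X^{(1)}_i=1\ \big|\ X^{(d)}(L_{d-1}(i))=x(L_{d-1}(i))\big]\ge 0.95.$$ Then $\mathbb{P}[X^{(0)}=1\mid X^{(d)}=x]\ge 19/20$.
   Context: Broadcast (Ising) tree model: complete $k$-ary tree of depth $d$ with root $\rho$; $L_r$ = vertices at depth $r$; for a vertex $i$, $L_s(i)$ = its descendants $s$ levels below it, and $x(A)$ denotes the restriction of $x$ to the index set $A$. $\sigma_\rho$ uniform on $\{0,1\}$; each child $v$ of $u$ independently has $\sigma_v=\sigma_u$ with probability $(1+\theta)/2$ and $1-\sigma_u$ otherwise; $X^{(r)}=(\sigma_v)_{v\in L_r}$. *)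

theory Defs
  imports Complex_Main "HOL-Library.FuncSet"
begin

text \<open>A vertex at depth r is a list of length r
  with entries in {0..<k}; the root is the empty list, and the children of v
  are the lists v @ [j], j < k. So the parent of a non-root vertex v is butlast v,
  and the descendants of the root child [i] are the vertices with head i.
  Spins take values in bool, True standing for 1 and False for 0.\<close>

definition tree_level :: "nat \<Rightarrow> nat \<Rightarrow> nat list set" where
  "tree_level k r = {v. length v = r \<and> set v \<subseteq> {..<k}}"

definition tree_vertices :: "nat \<Rightarrow> nat \<Rightarrow> nat list set" where
  "tree_vertices k d = {v. length v \<le> d \<and> set v \<subseteq> {..<k}}"

definition configs :: "nat \<Rightarrow> nat \<Rightarrow> (nat list \<Rightarrow> bool) set" where
  "configs k d = PiE (tree_vertices k d) (\<lambda>_. UNIV)"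

text \<open>Probability of a configuration in the broadcast model: root uniform,
  each edge keeps the parent's value with probability (1+theta)/2.\<close>
definition bc_weight :: "real \<Rightarrow> nat \<Rightarrow> nat \<Rightarrow> (nat list \<Rightarrow> bool) \<Rightarrow> real" where
  "bc_weight \<theta> k d \<sigma> = 1/2 * (\<Prod>v \<in> tree_vertices k d - {[]}.
      (if \<sigma> v = \<sigma> (butlast v) then (1 + \<theta>) / 2 else (1 - \<theta>) / 2))"

definition bc_prob :: "real \<Rightarrow> nat \<Rightarrow> nat \<Rightarrow> ((nat list \<Rightarrow> bool) \<Rightarrow> bool) \<Rightarrow> real" where
  "bc_prob \<theta> k d E = (\<Sum>\<sigma> \<in> {\<sigma> \<in> configs k d. E \<sigma>}. bc_weight \<theta> k d \<sigma>)"

definition bc_cond_prob :: "real \<Rightarrow> nat \<Rightarrow> nat \<Rightarrow> ((nat list \<Rightarrow> bool) \<Rightarrow> bool)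
    \<Rightarrow> ((nat list \<Rightarrow> bool) \<Rightarrow> bool) \<Rightarrow> real" where
  "bc_cond_prob \<theta> k d A B = bc_prob \<theta> k d (\<lambda>\<sigma>. A \<sigma> \<and> B \<sigma>) / bc_prob \<theta> k d B"

end

theory Submission
  imports Defs
begin

definition ee :: "real \<Rightarrow> bool \<Rightarrow> bool \<Rightarrow> real" where
  "ee \<theta> a b = (if a = b then (1 + \<theta>) / 2 else (1 - \<theta>) / 2)"

definition pw :: "real \<Rightarrow> nat \<Rightarrow> nat \<Rightarrow> (nat list \<Rightarrow> bool) \<Rightarrow> real" where
  "pw \<theta> k d \<sigma> = (\<Prod>v \<in> tree_vertices k d - {[]}. ee \<theta> (\<sigma> v) (\<sigma> (butlast v)))"

lemma bc_weight_pw: "bc_weight \<theta> k d \<sigma> = 1/2 * pw \<theta> k d \<sigma>"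
  unfolding bc_weight_def pw_def ee_def by simp

lemma finite_tv: "finite (tree_vertices k d)"
proof -
  have "tree_vertices k d = {xs. set xs \<subseteq> {..<k} \<and> length xs \<le> d}"
    unfolding tree_vertices_def by auto
  then show ?thesis using finite_lists_length_le[of "{..<k}" d] by simp
qed

lemma finite_configs: "finite (configs k d)"
  unfolding configs_def by (rule finite_PiE[OF finite_tv]) simp

lemma nil_tv[simp]: "[] \<in> tree_vertices k d"
  unfolding tree_vertices_def by simp

lemma cons_tv[simp]: "(j # v \<in> tree_vertices k (Suc d)) \<longleftrightarrow> j < k \<and> v \<in> tree_vertices k d"
  unfolding tree_vertices_def by auto

lemma cons_tl[simp]: "(j # v \<in> tree_level k (Suc d)) \<longleftrightarrow> j < k \<and> v \<in> tree_level k d"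
  unfolding tree_level_def by auto

lemma tl_sub_tv: "tree_level k d \<subseteq> tree_vertices k d"
  unfolding tree_level_def tree_vertices_def by auto

definition sub :: "nat \<Rightarrow> nat \<Rightarrow> (nat list \<Rightarrow> bool) \<Rightarrow> nat \<Rightarrow> (nat list \<Rightarrow> bool)" where
  "sub k d \<sigma> j = restrict (\<lambda>v. \<sigma> (j # v)) (tree_vertices k d)"

definition join :: "nat \<Rightarrow> nat \<Rightarrow> bool \<Rightarrow> (nat \<Rightarrow> nat list \<Rightarrow> bool) \<Rightarrow> (nat list \<Rightarrow> bool)" where
  "join k d b f = (\<lambda>v. if v = [] then b else if v \<in> tree_vertices k (Suc d) then f (hd v) (tl v) else undefined)"

lemma join_bij: "bij_betw (\<lambda>(b,f). join k d b f) (UNIV \<times> PiE {..<k} (\<lambda>_. configs k d)) (configs k (Suc d))"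
proof (rule bij_betw_byWitness[where f' = "\<lambda>\<sigma>. (\<sigma> [], restrict (sub k d \<sigma>) {..<k})"])
  show "\<forall>a\<in>UNIV \<times> (\<Pi>\<^sub>E i\<in>{..<k}. configs k d).
       (\<lambda>\<sigma>. (\<sigma> [], restrict (sub k d \<sigma>) {..<k})) ((\<lambda>(b, f). join k d b f) a) = a"
  proof
    fix a assume a: "a \<in> (UNIV::bool set) \<times> (\<Pi>\<^sub>E i\<in>{..<k}. configs k d)"
    obtain b :: bool and f where ab: "a = (b, f)" and f: "f \<in> (\<Pi>\<^sub>E i\<in>{..<k}. configs k d)" using a by auto
    have "restrict (sub k d (join k d b f)) {..<k} = f"
    proof
      fix j show "restrict (sub k d (join k d b f)) {..<k} j = f j"
      proof (cases "j < k")
        case True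
        have "f j \<in> configs k d" using f True by auto
        then have ext: "f j \<in> extensional (tree_vertices k d)" unfolding configs_def by (simp add: PiE_def)
        have "sub k d (join k d b f) j = f j"
        proof
          fix v show "sub k d (join k d b f) j v = f j v"
            using True ext unfolding sub_def join_def by (auto simp: extensional_def)
        qed
        then show ?thesis using True by simp
      next
        case False then show ?thesis using f by (simp add: PiE_def extensional_def)
      qed
    qed
    then show "(\<lambda>\<sigma>. (\<sigma> [], restrict (sub k d \<sigma>) {..<k})) ((\<lambda>(b, f). join k d b f) a) = a"
      unfolding ab by (simp add: join_def)
  qed
  show "\<forall>a'\<in>configs k (Suc d). (\<lambda>(b, f). join k d b f) ((\<lambda>\<sigma>. (\<sigma> [], restrict (sub k d \<sigma>) {..<k})) a') = a'"
  proof
    fix \<sigma> assume s: "\<sigma> \<in> configs k (Suc d)"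
    then have ext: "\<sigma> \<in> extensional (tree_vertices k (Suc d))" unfolding configs_def by (simp add: PiE_def)
    show "(\<lambda>(b, f). join k d b f) ((\<lambda>\<sigma>. (\<sigma> [], restrict (sub k d \<sigma>) {..<k})) \<sigma>) = \<sigma>"
    proof
      fix v show "(\<lambda>(b, f). join k d b f) ((\<lambda>\<sigma>. (\<sigma> [], restrict (sub k d \<sigma>) {..<k})) \<sigma>) v = \<sigma> v"
      proof (cases v)
        case Nil then show ?thesis by (simp add: join_def)
      next
        case (Cons j w) then show ?thesis using ext
          by (auto simp: join_def sub_def extensional_def)
      qed
    qed
  qed
  show "(\<lambda>(b, f). join k d b f) ` (UNIV \<times> (\<Pi>\<^sub>E i\<in>{..<k}. configs k d)) \<subseteq> configs k (Suc d)"
    by (auto simp: configs_def join_def)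
  show "(\<lambda>\<sigma>. (\<sigma> [], restrict (sub k d \<sigma>) {..<k})) ` configs k (Suc d) \<subseteq> UNIV \<times> (\<Pi>\<^sub>E i\<in>{..<k}. configs k d)"
    by (auto simp: configs_def sub_def)
qed

lemma tv_Suc_split: "tree_vertices k (Suc d) - {[]} = (\<Union>j\<in>{..<k}. (Cons j) ` tree_vertices k d)"
proof
  show "tree_vertices k (Suc d) - {[]} \<subseteq> (\<Union>j\<in>{..<k}. (Cons j) ` tree_vertices k d)"
  proof
    fix v assume "v \<in> tree_vertices k (Suc d) - {[]}"
    then obtain j w where "v = j # w" "j < k" "w \<in> tree_vertices k d"
      by (cases v) auto
    then show "v \<in> (\<Union>j\<in>{..<k}. (Cons j) ` tree_vertices k d)" by auto
  qed
qed auto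

lemma butlast_tv: "v \<in> tree_vertices k d \<Longrightarrow> butlast v \<in> tree_vertices k d"
  unfolding tree_vertices_def by (auto dest: in_set_butlastD)

lemma pw_join:
  assumes f: "f \<in> PiE {..<k} (\<lambda>_. configs k d)"
  shows "pw \<theta> k (Suc d) (join k d b f) = (\<Prod>j<k. ee \<theta> (f j []) b * pw \<theta> k d (f j))"
proof -
  let ?g = "\<lambda>v. ee \<theta> (join k d b f v) (join k d b f (butlast v))"
  have "pw \<theta> k (Suc d) (join k d b f) = prod ?g (\<Union>j\<in>{..<k}. (Cons j) ` tree_vertices k d)"
    unfolding pw_def tv_Suc_split ..
  also have "\<dots> = (\<Prod>j<k. prod ?g ((Cons j) ` tree_vertices k d))"
    by (rule prod.UNION_disjoint) (auto simp: finite_tv)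
  also have "\<dots> = (\<Prod>j<k. ee \<theta> (f j []) b * pw \<theta> k d (f j))"
  proof (rule prod.cong[OF refl])
    fix j assume j: "j \<in> {..<k}"
    have "prod ?g ((Cons j) ` tree_vertices k d) = prod (?g \<circ> Cons j) (tree_vertices k d)"
      by (rule prod.reindex) simp
    also have "\<dots> = (?g \<circ> Cons j) [] * prod (?g \<circ> Cons j) (tree_vertices k d - {[]})"
      by (rule prod.remove) (auto simp: finite_tv)
    also have "(?g \<circ> Cons j) [] = ee \<theta> (f j []) b"
      using j by (simp add: join_def)
    also have "prod (?g \<circ> Cons j) (tree_vertices k d - {[]}) = pw \<theta> k d (f j)"
      unfolding pw_def
    proof (rule prod.cong[OF refl])
      fix v assume v: "v \<in> tree_vertices k d - {[]}"
      then have "butlast v \<in> tree_vertices k d" by (simp add: butlast_tv)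
      then show "(?g \<circ> Cons j) v = ee \<theta> (f j v) (f j (butlast v))"
        using j v by (simp add: join_def)
    qed
    finally show "prod ?g ((Cons j) ` tree_vertices k d) = ee \<theta> (f j []) b * pw \<theta> k d (f j)" .
  qed
  finally show ?thesis .
qed

lemma sum_configs_Suc:
  "(\<Sum>\<sigma>\<in>configs k (Suc d). G \<sigma>) = (\<Sum>b\<in>UNIV. \<Sum>f\<in>PiE {..<k} (\<lambda>_. configs k d). G (join k d b f))"
proof -
  have "(\<Sum>\<sigma>\<in>configs k (Suc d). G \<sigma>) = (\<Sum>p\<in>UNIV \<times> PiE {..<k} (\<lambda>_. configs k d). G ((\<lambda>(b,f). join k d b f) p))"
    by (rule sum.reindex_bij_betw[OF join_bij, symmetric])
  also have "\<dots> = (\<Sum>b\<in>UNIV. \<Sum>f\<in>PiE {..<k} (\<lambda>_. configs k d). G (join k d b f))"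
    unfolding sum.cartesian_product by (intro sum.cong) auto
  finally show ?thesis .
qed

lemma sub_join:
  assumes f: "f \<in> PiE {..<k} (\<lambda>_. configs k d)" and j: "j < k"
  shows "sub k d (join k d b f) j = f j"
proof
  fix v
  have "f j \<in> configs k d" using f j by auto
  then have ext: "f j \<in> extensional (tree_vertices k d)" unfolding configs_def by (simp add: PiE_def)
  show "sub k d (join k d b f) j v = f j v"
    using j ext unfolding sub_def join_def by (auto simp: extensional_def)
qed

lemma join_nil[simp]: "join k d b f [] = b"
  by (simp add: join_def)

lemma main_split:
  fixes r :: "bool \<Rightarrow> real" and g :: "nat \<Rightarrow> (nat list \<Rightarrow> bool) \<Rightarrow> real"
  shows "(\<Sum>\<sigma>\<in>configs k (Suc d). r (\<sigma> []) * (\<Prod>j<k. g j (sub k d \<sigma> j)) * pw \<theta> k (Suc d) \<sigma>)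
     = (\<Sum>b\<in>UNIV. r b * (\<Prod>j<k. \<Sum>\<tau>\<in>configs k d. g j \<tau> * ee \<theta> (\<tau> []) b * pw \<theta> k d \<tau>))"
proof -
  have "(\<Sum>\<sigma>\<in>configs k (Suc d). r (\<sigma> []) * (\<Prod>j<k. g j (sub k d \<sigma> j)) * pw \<theta> k (Suc d) \<sigma>)
    = (\<Sum>b\<in>UNIV. \<Sum>f\<in>PiE {..<k} (\<lambda>_. configs k d). r b * (\<Prod>j<k. g j (f j) * ee \<theta> (f j []) b * pw \<theta> k d (f j)))"
    unfolding sum_configs_Suc
  proof (intro sum.cong refl)
    fix b f assume f: "f \<in> PiE {..<k} (\<lambda>_. configs k d)"
    have "(\<Prod>j<k. g j (sub k d (join k d b f) j)) = (\<Prod>j<k. g j (f j))"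
      using f by (intro prod.cong refl) (simp add: sub_join)
    then show "r (join k d b f []) * (\<Prod>j<k. g j (sub k d (join k d b f) j)) * pw \<theta> k (Suc d) (join k d b f)
      = r b * (\<Prod>j<k. g j (f j) * ee \<theta> (f j []) b * pw \<theta> k d (f j))"
      using f by (simp add: pw_join prod.distrib mult.assoc)
  qed
  also have "\<dots> = (\<Sum>b\<in>UNIV. r b * (\<Prod>j<k. \<Sum>\<tau>\<in>configs k d. g j \<tau> * ee \<theta> (\<tau> []) b * pw \<theta> k d \<tau>))"
    by (simp add: prod_sum_PiE finite_configs sum_distrib_left)
  finally show ?thesis .
qed

definition lm :: "nat \<Rightarrow> nat \<Rightarrow> (nat list \<Rightarrow> bool) \<Rightarrow> (nat list \<Rightarrow> bool) \<Rightarrow> (nat list \<Rightarrow> bool) \<Rightarrow> bool" where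
  "lm k d M x \<sigma> = (\<forall>v\<in>tree_level k d. M v \<longrightarrow> \<sigma> v = x v)"

definition ind :: "bool \<Rightarrow> real" where "ind P = (if P then 1 else 0)"

lemma lm_Suc: "lm k (Suc d) M x \<sigma> \<longleftrightarrow> (\<forall>j<k. lm k d (\<lambda>v. M (j#v)) (\<lambda>v. x (j#v)) (sub k d \<sigma> j))"
proof
  assume a: "lm k (Suc d) M x \<sigma>"
  show "\<forall>j<k. lm k d (\<lambda>v. M (j#v)) (\<lambda>v. x (j#v)) (sub k d \<sigma> j)"
  proof (intro allI impI)
    fix j assume j: "j < k"
    show "lm k d (\<lambda>v. M (j#v)) (\<lambda>v. x (j#v)) (sub k d \<sigma> j)"
      unfolding lm_def
    proof (intro ballI impI)
      fix v assume v: "v \<in> tree_level k d" and m: "M (j # v)"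
      then have "v \<in> tree_vertices k d" using tl_sub_tv by blast
      then show "sub k d \<sigma> j v = x (j # v)" using a v m j unfolding lm_def sub_def by simp
    qed
  qed
next
  assume a: "\<forall>j<k. lm k d (\<lambda>v. M (j#v)) (\<lambda>v. x (j#v)) (sub k d \<sigma> j)"
  show "lm k (Suc d) M x \<sigma>"
    unfolding lm_def
  proof (intro ballI impI)
    fix v assume v: "v \<in> tree_level k (Suc d)" and m: "M v"
    then obtain j w where vw: "v = j # w" by (cases v) (auto simp: tree_level_def)
    then have j: "j < k" and w: "w \<in> tree_level k d" using v by auto
    then have "w \<in> tree_vertices k d" using tl_sub_tv by blast
    have "sub k d \<sigma> j w = x (j#w)" using a j w m vw unfolding lm_def by auto
    then show "\<sigma> v = x v" using vw \<open>w \<in> tree_vertices k d\<close> unfolding sub_def by simp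
  qed
qed

lemma ind_all: "(\<Prod>j<(n::nat). ind (P j)) = ind (\<forall>j<n. P j)"
  by (induction n) (auto simp: ind_def less_Suc_eq)

definition F :: "real \<Rightarrow> nat \<Rightarrow> nat \<Rightarrow> (nat list \<Rightarrow> bool) \<Rightarrow> (nat list \<Rightarrow> bool) \<Rightarrow> bool \<Rightarrow> real" where
  "F \<theta> k d M x b = (\<Sum>\<tau>\<in>configs k d. ind (lm k d M x \<tau>) * ee \<theta> (\<tau> []) b * pw \<theta> k d \<tau>)"

lemma F_Suc: "F \<theta> k (Suc d) M x b = (\<Sum>c\<in>UNIV. ee \<theta> c b * (\<Prod>j<k. F \<theta> k d (\<lambda>v. M (j#v)) (\<lambda>v. x (j#v)) c))"
proof -
  have "F \<theta> k (Suc d) M x b = (\<Sum>\<sigma>\<in>configs k (Suc d). (\<lambda>c. ee \<theta> c b) (\<sigma> []) *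
      (\<Prod>j<k. (\<lambda>j \<tau>. ind (lm k d (\<lambda>v. M (j#v)) (\<lambda>v. x (j#v)) \<tau>)) j (sub k d \<sigma> j)) * pw \<theta> k (Suc d) \<sigma>)"
    unfolding F_def by (intro sum.cong refl) (simp add: ind_all lm_Suc[of k d M x])
  also have "\<dots> = (\<Sum>c\<in>UNIV. ee \<theta> c b * (\<Prod>j<k. F \<theta> k d (\<lambda>v. M (j#v)) (\<lambda>v. x (j#v)) c))"
    unfolding F_def by (rule main_split[where r = "\<lambda>c. ee \<theta> c b" and g = "\<lambda>j \<tau>. ind (lm k d (\<lambda>v. M (j#v)) (\<lambda>v. x (j#v)) \<tau>)"])
  finally show ?thesis .
qed

lemma configs0_sum: "(\<Sum>\<tau>\<in>configs k 0. h \<tau>) = (\<Sum>b\<in>UNIV. h (\<lambda>v. if v = [] then b else undefined))"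
proof -
  have tv0: "tree_vertices k 0 = {[]}" unfolding tree_vertices_def by auto
  have "bij_betw (\<lambda>b. (\<lambda>v. if v = [] then b else undefined)) UNIV (configs k 0)"
  proof (rule bij_betw_byWitness[where f' = "\<lambda>\<tau>. \<tau> []"])
    show "\<forall>a'\<in>configs k 0. (\<lambda>v. if v = [] then a' [] else undefined) = a'"
    proof
      fix a' assume "a' \<in> configs k 0"
      then have "\<forall>v. v \<noteq> [] \<longrightarrow> a' v = undefined" unfolding configs_def tv0 by (auto simp: PiE_def extensional_def)
      then show "(\<lambda>v. if v = [] then a' [] else undefined) = a'" by (intro ext) auto
    qed
  qed (auto simp: configs_def tv0)
  then show ?thesis by (rule sum.reindex_bij_betw[symmetric])
qed

lemma F_0: "F \<theta> k 0 M x b = (\<Sum>c\<in>UNIV. ind (M [] \<longrightarrow> c = x []) * ee \<theta> c b)"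
proof -
  have tv0: "tree_vertices k 0 = {[]}" unfolding tree_vertices_def by auto
  have tl0: "tree_level k 0 = {[]}" unfolding tree_level_def by auto
  show ?thesis unfolding F_def configs0_sum
    by (intro sum.cong refl) (simp add: lm_def tl0 pw_def tv0)
qed

lemma ee_sum: "ee \<theta> True b + ee \<theta> False b = 1"
  unfolding ee_def by (cases b) (auto simp: field_simps)

lemma ee_sum2: "ee \<theta> False b + ee \<theta> True b = 1"
  unfolding ee_def by (cases b) (auto simp: field_simps)

lemma F_free: "F \<theta> k d (\<lambda>_. False) x b = 1"
proof (induction d arbitrary: x b)
  case 0 then show ?case unfolding F_0 by (simp add: ind_def UNIV_bool ee_sum ee_sum2)
next
  case (Suc d) then show ?case unfolding F_Suc by (simp add: UNIV_bool ee_sum ee_sum2)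
qed

lemma ee_pos: "-1 < \<theta> \<Longrightarrow> \<theta> < 1 \<Longrightarrow> ee \<theta> a b > 0"
  unfolding ee_def by auto

lemma F_pos: assumes "-1 < \<theta>" "\<theta> < 1" shows "F \<theta> k d M x b > 0"
proof (induction d arbitrary: M x b)
  case 0
  have "(\<Sum>c\<in>UNIV. ind (M [] \<longrightarrow> c = x []) * ee \<theta> c b) > 0"
  proof (rule sum_pos2[where i = "x []"])
    show "\<And>c. c \<in> UNIV \<Longrightarrow> 0 \<le> ind (M [] \<longrightarrow> c = x []) * ee \<theta> c b"
      using ee_pos[OF assms] by (simp add: ind_def less_imp_le)
  qed (auto simp: ind_def ee_pos[OF assms])
  then show ?case unfolding F_0 .
next
  case (Suc d)
  show ?case unfolding F_Suc
    by (rule sum_pos) (auto intro!: mult_pos_pos prod_pos ee_pos[OF assms] Suc.IH)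
qed

lemma split_root: "(\<Sum>\<tau>\<in>A. ind (L \<tau>) * q (\<tau> []) * (p \<tau>::real)) =
   q True * (\<Sum>\<tau>\<in>A. ind (L \<tau>) * ind (\<tau> []) * p \<tau>) + q False * (\<Sum>\<tau>\<in>A. ind (L \<tau>) * ind (\<not> \<tau> []) * p \<tau>)"
  unfolding sum_distrib_left sum.distrib[symmetric] by (intro sum.cong refl) (auto simp: ind_def)

lemma bc_prob_ind: "bc_prob \<theta> k d E = (\<Sum>\<sigma>\<in>configs k d. ind (E \<sigma>) * (1/2) * pw \<theta> k d \<sigma>)"
  unfolding bc_prob_def bc_weight_pw sum.inter_filter[OF finite_configs] by (intro sum.cong refl) (simp add: ind_def)

lemma prob_root:
  "bc_prob \<theta> k (Suc d) (\<lambda>\<sigma>. P (\<sigma> []) \<and> lm k (Suc d) M x \<sigma>)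
   = (\<Sum>b\<in>UNIV. ind (P b) / 2 * (\<Prod>j<k. F \<theta> k d (\<lambda>v. M (j#v)) (\<lambda>v. x (j#v)) b))"
proof -
  have "bc_prob \<theta> k (Suc d) (\<lambda>\<sigma>. P (\<sigma> []) \<and> lm k (Suc d) M x \<sigma>)
    = (\<Sum>\<sigma>\<in>configs k (Suc d). (\<lambda>c. ind (P c) / 2) (\<sigma> []) *
      (\<Prod>j<k. (\<lambda>j \<tau>. ind (lm k d (\<lambda>v. M (j#v)) (\<lambda>v. x (j#v)) \<tau>)) j (sub k d \<sigma> j)) * pw \<theta> k (Suc d) \<sigma>)"
    unfolding bc_prob_ind by (intro sum.cong refl) (simp add: ind_all lm_Suc[of k d M x] ind_def, blast)
  also have "\<dots> = (\<Sum>b\<in>UNIV. ind (P b) / 2 * (\<Prod>j<k. F \<theta> k d (\<lambda>v. M (j#v)) (\<lambda>v. x (j#v)) b))"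
    unfolding F_def by (rule main_split[where r = "\<lambda>c. ind (P c) / 2" and g = "\<lambda>j \<tau>. ind (lm k d (\<lambda>v. M (j#v)) (\<lambda>v. x (j#v)) \<tau>)"])
  finally show ?thesis .
qed

definition AL :: "real \<Rightarrow> nat \<Rightarrow> nat \<Rightarrow> (nat list \<Rightarrow> bool) \<Rightarrow> real" where
  "AL \<theta> k d y = (\<Sum>\<tau>\<in>configs k d. ind (lm k d (\<lambda>_. True) y \<tau>) * ind (\<tau> []) * pw \<theta> k d \<tau>)"
definition BE :: "real \<Rightarrow> nat \<Rightarrow> nat \<Rightarrow> (nat list \<Rightarrow> bool) \<Rightarrow> real" where
  "BE \<theta> k d y = (\<Sum>\<tau>\<in>configs k d. ind (lm k d (\<lambda>_. True) y \<tau>) * ind (\<not> \<tau> []) * pw \<theta> k d \<tau>)"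

lemma F_AB: "F \<theta> k d (\<lambda>_. True) y b = ee \<theta> True b * AL \<theta> k d y + ee \<theta> False b * BE \<theta> k d y"
  unfolding F_def AL_def BE_def by (rule split_root)

lemma prob_child:
  assumes i: "i < k"
  shows "bc_prob \<theta> k (Suc d) (\<lambda>\<sigma>. Q (\<sigma> [i]) \<and> lm k (Suc d) (\<lambda>v. hd v = i) x \<sigma>)
   = (\<Sum>b\<in>UNIV. 1/2 * (ind (Q True) * ee \<theta> True b * AL \<theta> k d (\<lambda>v. x (i#v))
        + ind (Q False) * ee \<theta> False b * BE \<theta> k d (\<lambda>v. x (i#v))))"
proof -
  define g where "g = (\<lambda>j \<tau>. ind (lm k d (\<lambda>v. j = i) (\<lambda>v. x (j#v)) \<tau>) * (if j = i then ind (Q (\<tau> [])) else 1))"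
  have "bc_prob \<theta> k (Suc d) (\<lambda>\<sigma>. Q (\<sigma> [i]) \<and> lm k (Suc d) (\<lambda>v. hd v = i) x \<sigma>)
    = (\<Sum>\<sigma>\<in>configs k (Suc d). (\<lambda>c. 1/2) (\<sigma> []) * (\<Prod>j<k. g j (sub k d \<sigma> j)) * pw \<theta> k (Suc d) \<sigma>)"
    unfolding bc_prob_ind
  proof (intro sum.cong refl)
    fix \<sigma> assume "\<sigma> \<in> configs k (Suc d)"
    have si: "sub k d \<sigma> i [] = \<sigma> [i]" unfolding sub_def by simp
    have "(\<Prod>j<k. g j (sub k d \<sigma> j)) = (\<Prod>j<k. ind (lm k d (\<lambda>v. j = i) (\<lambda>v. x (j#v)) (sub k d \<sigma> j))) *
         (\<Prod>j<k. (if j = i then ind (Q (sub k d \<sigma> j [])) else 1))"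
      unfolding g_def prod.distrib by (intro arg_cong2[where f = "(*)"] prod.cong refl)
    also have "\<dots> = ind (lm k (Suc d) (\<lambda>v. hd v = i) x \<sigma>) * ind (Q (\<sigma> [i]))"
      using i by (simp add: ind_all lm_Suc si prod.delta)
    finally show "ind (Q (\<sigma> [i]) \<and> lm k (Suc d) (\<lambda>v. hd v = i) x \<sigma>) * (1 / 2) * pw \<theta> k (Suc d) \<sigma> =
         (\<lambda>c. 1/2) (\<sigma> []) * (\<Prod>j<k. g j (sub k d \<sigma> j)) * pw \<theta> k (Suc d) \<sigma>"
      by (simp add: ind_def)
  qed
  also have "\<dots> = (\<Sum>b\<in>UNIV. 1/2 * (\<Prod>j<k. \<Sum>\<tau>\<in>configs k d. g j \<tau> * ee \<theta> (\<tau> []) b * pw \<theta> k d \<tau>))"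
    by (rule main_split)
  also have "\<dots> = (\<Sum>b\<in>UNIV. 1/2 * (ind (Q True) * ee \<theta> True b * AL \<theta> k d (\<lambda>v. x (i#v))
        + ind (Q False) * ee \<theta> False b * BE \<theta> k d (\<lambda>v. x (i#v))))"
  proof (intro sum.cong refl arg_cong2[where f = "(*)"])
    fix b
    have "(\<Prod>j<k. \<Sum>\<tau>\<in>configs k d. g j \<tau> * ee \<theta> (\<tau> []) b * pw \<theta> k d \<tau>)
      = (\<Prod>j<k. if j = i then (\<Sum>\<tau>\<in>configs k d. ind (lm k d (\<lambda>_. True) (\<lambda>v. x (i#v)) \<tau>) * (ind (Q (\<tau> [])) * ee \<theta> (\<tau> []) b) * pw \<theta> k d \<tau>) else 1)"
    proof (intro prod.cong refl)
      fix j assume "j \<in> {..<k}"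
      show "(\<Sum>\<tau>\<in>configs k d. g j \<tau> * ee \<theta> (\<tau> []) b * pw \<theta> k d \<tau>) =
        (if j = i then (\<Sum>\<tau>\<in>configs k d. ind (lm k d (\<lambda>_. True) (\<lambda>v. x (i#v)) \<tau>) * (ind (Q (\<tau> [])) * ee \<theta> (\<tau> []) b) * pw \<theta> k d \<tau>) else 1)"
      proof (cases "j = i")
        case True then show ?thesis unfolding g_def by (simp add: mult_ac)
      next
        case False then show ?thesis using F_free[of \<theta> k d "\<lambda>v. x (j#v)" b] unfolding g_def F_def by simp
      qed
    qed
    also have "\<dots> = ind (Q True) * ee \<theta> True b * AL \<theta> k d (\<lambda>v. x (i#v))
        + ind (Q False) * ee \<theta> False b * BE \<theta> k d (\<lambda>v. x (i#v))"
      using i unfolding AL_def BE_def by (simp add: prod.delta split_root[where q = "\<lambda>c. ind (Q c) * ee \<theta> c b"])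
    finally show "(\<Prod>j<k. \<Sum>\<tau>\<in>configs k d. g j \<tau> * ee \<theta> (\<tau> []) b * pw \<theta> k d \<tau>) = \<dots>" .
  qed
  finally show ?thesis .
qed

lemma hyp_ratio:
  assumes i: "i < k"
  shows "bc_cond_prob \<theta> k (Suc d) (\<lambda>\<sigma>. \<sigma> [i]) (\<lambda>\<sigma>. \<forall>v\<in>tree_level k (Suc d). hd v = i \<longrightarrow> \<sigma> v = x v)
    = AL \<theta> k d (\<lambda>v. x (i#v)) / (AL \<theta> k d (\<lambda>v. x (i#v)) + BE \<theta> k d (\<lambda>v. x (i#v)))"
proof -
  have n: "bc_prob \<theta> k (Suc d) (\<lambda>\<sigma>. \<sigma> [i] \<and> (\<forall>v\<in>tree_level k (Suc d). hd v = i \<longrightarrow> \<sigma> v = x v))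
     = AL \<theta> k d (\<lambda>v. x (i#v)) / 2"
    using prob_child[OF i, of \<theta> d "\<lambda>c. c" x] unfolding lm_def
    by (simp add: UNIV_bool ind_def ee_def field_simps)
  have m: "bc_prob \<theta> k (Suc d) (\<lambda>\<sigma>. (\<forall>v\<in>tree_level k (Suc d). hd v = i \<longrightarrow> \<sigma> v = x v))
     = (AL \<theta> k d (\<lambda>v. x (i#v)) + BE \<theta> k d (\<lambda>v. x (i#v))) / 2"
    using prob_child[OF i, of \<theta> d "\<lambda>c. True" x] unfolding lm_def
    by (simp add: UNIV_bool ind_def ee_def field_simps)
  show ?thesis unfolding bc_cond_prob_def n m by simp
qed

lemma concl_ratio:
  "bc_cond_prob \<theta> k (Suc d) (\<lambda>\<sigma>. \<sigma> []) (\<lambda>\<sigma>. \<forall>v\<in>tree_level k (Suc d). \<sigma> v = x v)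
    = (\<Prod>j<k. F \<theta> k d (\<lambda>_. True) (\<lambda>v. x (j#v)) True) /
      ((\<Prod>j<k. F \<theta> k d (\<lambda>_. True) (\<lambda>v. x (j#v)) True) + (\<Prod>j<k. F \<theta> k d (\<lambda>_. True) (\<lambda>v. x (j#v)) False))"
proof -
  have n: "bc_prob \<theta> k (Suc d) (\<lambda>\<sigma>. \<sigma> [] \<and> (\<forall>v\<in>tree_level k (Suc d). \<sigma> v = x v))
     = (\<Prod>j<k. F \<theta> k d (\<lambda>_. True) (\<lambda>v. x (j#v)) True) / 2"
    using prob_root[of \<theta> k d "\<lambda>c. c" "\<lambda>_. True" x] unfolding lm_def
    by (simp add: UNIV_bool ind_def)
  have m: "bc_prob \<theta> k (Suc d) (\<lambda>\<sigma>. (\<forall>v\<in>tree_level k (Suc d). \<sigma> v = x v))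
     = ((\<Prod>j<k. F \<theta> k d (\<lambda>_. True) (\<lambda>v. x (j#v)) True) + (\<Prod>j<k. F \<theta> k d (\<lambda>_. True) (\<lambda>v. x (j#v)) False)) / 2"
    using prob_root[of \<theta> k d "\<lambda>c. True" "\<lambda>_. True" x] unfolding lm_def
    by (simp add: UNIV_bool ind_def field_simps)
  show ?thesis unfolding bc_cond_prob_def n m by simp
qed

lemma pw_nonneg: "-1 < \<theta> \<Longrightarrow> \<theta> < 1 \<Longrightarrow> pw \<theta> k d \<tau> \<ge> 0"
  unfolding pw_def by (intro prod_nonneg) (auto intro: less_imp_le ee_pos)

lemma ind_nonneg: "ind P \<ge> 0" by (simp add: ind_def)

lemma final_arith:
  fixes a b :: "nat \<Rightarrow> real" and G :: "nat set"
  assumes nn: "\<And>j. j < 6 \<Longrightarrow> a j \<ge> 0 \<and> b j \<ge> 0" and pos: "\<And>j. j < 6 \<Longrightarrow> a j + b j > 0"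
    and G: "G \<subseteq> {..<6}" "card G \<ge> 4" and good: "\<And>j. j \<in> G \<Longrightarrow> a j \<ge> 19 * b j"
  shows "(\<Prod>j<6. 19/20 * a j + 1/20 * b j) /
      ((\<Prod>j<6. 19/20 * a j + 1/20 * b j) + (\<Prod>j<(6::nat). 1/20 * a j + 19/20 * b j)) \<ge> 19/20"
proof -
  define PT where "PT = (\<Prod>j<6. 19/20 * a j + 1/20 * b j)"
  define PF where "PF = (\<Prod>j<(6::nat). 1/20 * a j + 19/20 * b j)"
  define \<rho> where "\<rho> = (\<lambda>j. if j \<in> G then 19/181 else (19::real))"
  have PTpos: "PT > 0" unfolding PT_def
  proof (rule prod_pos)
    fix j assume "j \<in> {..<(6::nat)}"
    then have "a j \<ge> 0" "b j \<ge> 0" "a j + b j > 0" using nn pos by auto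
    then show "19/20 * a j + 1/20 * b j > 0" by linarith
  qed
  have "PF \<le> (\<Prod>j<6. \<rho> j * (19/20 * a j + 1/20 * b j))" unfolding PF_def
  proof (rule prod_mono)
    fix j assume "j \<in> {..<(6::nat)}"
    then have h: "a j \<ge> 0" "b j \<ge> 0" using nn by auto
    show "0 \<le> 1/20 * a j + 19/20 * b j \<and> 1/20 * a j + 19/20 * b j \<le> \<rho> j * (19/20 * a j + 1/20 * b j)"
    proof (cases "j \<in> G")
      case True then show ?thesis using h good[of j] unfolding \<rho>_def by simp
    next
      case False then show ?thesis using h unfolding \<rho>_def by simp
    qed
  qed
  also have "\<dots> = (\<Prod>j<6. \<rho> j) * PT" unfolding PT_def by (simp add: prod.distrib)
  also have "(\<Prod>j<6. \<rho> j) = (19/181)^card G * 19^(6 - card G)"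
  proof -
    have "(\<Prod>j<6. \<rho> j) = prod (\<lambda>_. 19/181) ({..<6} \<inter> {x. x \<in> G}) * prod (\<lambda>_. 19) ({..<6} \<inter> - {x. x \<in> G})"
      unfolding \<rho>_def by (rule prod.If_cases) simp
    also have "{..<6} \<inter> {x. x \<in> G} = G" using G by auto
    also have "{..<6} \<inter> - {x. x \<in> G} = {..<6} - G" by auto
    finally have e: "(\<Prod>j<6. \<rho> j) = (19/181)^card G * 19^card ({..<6} - G)" by simp
    have "card ({..<6} - G) = 6 - card G" using G by (simp add: card_Diff_subset finite_subset)
    with e show ?thesis by simp
  qed
  also have "(19/181)^card G * 19^(6 - card G) \<le> (1/19::real)"
  proof -
    have "card G \<le> 6" using G card_mono[of "{..<6}" G] by simp
    then have "card G = 4 \<or> card G = 5 \<or> card G = 6" using G by auto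
    then show ?thesis by (auto simp: power_divide)
  qed
  finally have "PF \<le> 1/19 * PT" using PTpos by (simp add: mult_right_mono)
  moreover have "PF \<ge> 0" unfolding PF_def using nn by (intro prod_nonneg) (simp add: add_nonneg_nonneg)
  ultimately have "19/20 \<le> PT / (PT + PF)" using PTpos by (simp add: field_simps)
  then show ?thesis unfolding PT_def PF_def .
qed

theorem mainTheorem18:
  fixes d :: nat and x :: "nat list \<Rightarrow> bool"
  assumes "d \<ge> 1"
  assumes "card {i. i < 6 \<and>
             bc_cond_prob (9/10) 6 d (\<lambda>\<sigma>. \<sigma> [i])
               (\<lambda>\<sigma>. \<forall>v \<in> tree_level 6 d. hd v = i \<longrightarrow> \<sigma> v = x v) \<ge> 0.95} \<ge> 4"
  shows "bc_cond_prob (9/10) 6 d (\<lambda>\<sigma>. \<sigma> [])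
           (\<lambda>\<sigma>. \<forall>v \<in> tree_level 6 d. \<sigma> v = x v) \<ge> 19/20"
proof -
  obtain d' where dd: "d = Suc d'" using assms(1) by (cases d) auto
  define a where "a = (\<lambda>j. AL (9/10) 6 d' (\<lambda>v. x (j#v)))"
  define b where "b = (\<lambda>j. BE (9/10) 6 d' (\<lambda>v. x (j#v)))"
  have nn: "a j \<ge> 0 \<and> b j \<ge> 0" for j
    unfolding a_def b_def AL_def BE_def
    by (auto intro!: sum_nonneg mult_nonneg_nonneg ind_nonneg pw_nonneg)
  have Fj: "F (9/10) 6 d' (\<lambda>_. True) (\<lambda>v. x (j#v)) c = (if c then 19/20 * a j + 1/20 * b j else 1/20 * a j + 19/20 * b j)" for j c
    unfolding F_AB a_def b_def ee_def by (cases c) auto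
  have pos: "a j + b j > 0" for j
  proof -
    have "F (9/10) 6 d' (\<lambda>_. True) (\<lambda>v. x (j#v)) True > 0" by (rule F_pos) auto
    then have "19/20 * a j + 1/20 * b j > 0" unfolding Fj by simp
    then show ?thesis using nn[of j] by linarith
  qed
  define G where "G = {i. i < 6 \<and>
             bc_cond_prob (9/10) 6 d (\<lambda>\<sigma>. \<sigma> [i])
               (\<lambda>\<sigma>. \<forall>v \<in> tree_level 6 d. hd v = i \<longrightarrow> \<sigma> v = x v) \<ge> 0.95}"
  have G1: "G \<subseteq> {..<6}" "card G \<ge> 4" using assms(2) unfolding G_def by auto
  have good: "a j \<ge> 19 * b j" if j: "j \<in> G" for j
  proof -
    have "j < 6" and h: "a j / (a j + b j) \<ge> 0.95"
      using j hyp_ratio[of j 6 "9/10" d' x] unfolding G_def dd a_def b_def by auto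
    then show ?thesis using pos[of j] by (simp add: field_simps)
  qed
  have "(\<Prod>j<6. 19/20 * a j + 1/20 * b j) /
      ((\<Prod>j<6. 19/20 * a j + 1/20 * b j) + (\<Prod>j<(6::nat). 1/20 * a j + 19/20 * b j)) \<ge> 19/20"
    by (rule final_arith[OF _ _ G1 good]) (auto simp: nn pos)
  then show ?thesis unfolding dd concl_ratio Fj by simp
qed

end
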